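(* Let $\mathcal A=\{a_1,\dots,a_n\}\subset\mathbb Z^d$ with $n\ge d+2$ and $d$-dimensional convex hull, and let $C=(c_{ij})\in\mathbb R^{d\times n}$. Assume there are $p$ $d$-simplices $\Delta_1,\dots,\Delta_p$ of $\mathcal A$ which are part of a (common) regular subdivision of $\mathcal A$ and are positively decorated by $C$. Let $m_1,\dots,m_\ell\in\mathbb R^n$ be vectors such that \[ \mathcal C_{\Delta_1,\dots,\Delta_p}=\{h\in\mathbb R^n:\ \langle m_r,h\rangle>0,\ r=1,\dots,\ell\}, \] where $\mathcal C_{\Delta_1,\dots,\Delta_p}$ is the cone of all height vectors inducing a regular subdivision of $\mathcal A$ containing $\Delta_1,\dots,\Delta_p$. Then for any $\varepsilon\in(0,1)^\ell$ there exists $t_0(\varepsilon)>0$ such that for any $\gamma$ in the open set \[ U=\bigcup_{\varepsilon\in(0,1)^\ell}\{\gamma\in\mathbb R^n_{>0}:\ \gamma^{m_r}<t_0(\varepsilon)^{\varepsilon_r},\ r=1,\dots,\ell\}, \] the system \[ \sum_{j=1}^n c_{ij}\,\gamma_j\,x^{a_j}=0,\qquad i=1,\dots,d, \] has at least $p$ nondegenerate solutions in the positive orthant $\mathbb R^d_{>0}$. In particular, when $p=2$ and the two positively decorated $d$-simplices share a facet, this system has at least $2$ nondegenerate positive solutions for all $\gamma\in U$.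
   Context: $\gamma^{m}=\prod_k\gamma_k^{m_k}$. A $d$-simplex of $\mathcal A$ is a subset of $d+1$ affinely independent points. Regular subdivisions: for $h\in\mathbb R^n$ lift $a_j$ to $(a_j,h_j)\in\mathbb R^{d+1}$; lower faces of the convex hull of the lifted points are those with an inner normal of positive last coordinate; each lower face $F$ gives the cell $\{a_j:(a_j,h_j)\in F\}$; the collection of cells is the regular subdivision induced by $h$, and a simplex is part of it if it is one of its cells. Two $d$-simplices share a facet if the intersection of their convex hulls is a facet of both. A real $d\times(d+1)$ matrix $M$ is positively spanning if the numbers $(-1)^i\mathrm{minor}(M,i)$ are all nonzero of the same sign, $\mathrm{minor}(M,i)$ being the determinant after deleting column $i$. A $d$-simplex $\{a_{i_1},\dots,a_{i_{d+1}}\}$ is positively decorated by $C$ if the submatrix of $C$ with columns $i_1,\dots,i_{d+1}$ is positively spanning. A solution is nondegenerate if the Jacobian determinant of the system does not vanish at it. *)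

theory Defs
  imports "HOL-Analysis.Analysis"
begin

definition real_pt :: "int^'d::finite \<Rightarrow> real^'d" where
  "real_pt a = (\<chi> k. real_of_int (a $ k))"

definition monom :: "real^'d \<Rightarrow> int^'d \<Rightarrow> real" where
  "monom x a = (\<Prod>k\<in>UNIV. (x $ k) powi (a $ k))"

definition is_simplex :: "nat \<Rightarrow> (nat \<Rightarrow> int^'d) \<Rightarrow> nat set \<Rightarrow> bool" where
  "is_simplex n a S \<longleftrightarrow> S \<subseteq> {..<n} \<and> card S = CARD('d) + 1 \<and>
      \<not> affine_dependent (real_pt ` a ` S)"

definition lower_face :: "((real^'d) \<times> real) set \<Rightarrow> ((real^'d) \<times> real) set \<Rightarrow> bool" where
  "lower_face P F \<longleftrightarrow> F face_of P \<and> F \<noteq> {} \<and>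
     (\<exists>u u0. u0 > 0 \<and> F = {z \<in> P. \<forall>y\<in>P. inner (u, u0) z \<le> inner (u, u0) y})"

definition lifted_hull :: "nat \<Rightarrow> (nat \<Rightarrow> int^'d) \<Rightarrow> (nat \<Rightarrow> real) \<Rightarrow> ((real^'d) \<times> real) set" where
  "lifted_hull n a h = convex hull ((\<lambda>j. (real_pt (a j), h j)) ` {..<n})"

definition in_regular_subdivision ::
  "nat \<Rightarrow> (nat \<Rightarrow> int^'d) \<Rightarrow> (nat \<Rightarrow> real) \<Rightarrow> nat set \<Rightarrow> bool" where
  "in_regular_subdivision n a h S \<longleftrightarrow>
     (\<exists>F. lower_face (lifted_hull n a h) F \<and> S = {j. j < n \<and> (real_pt (a j), h j) \<in> F})"

definition enum_idx :: "'d::finite \<Rightarrow> nat" where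
  "enum_idx = (SOME f. bij_betw f (UNIV::'d set) {..<CARD('d)})"

definition minor :: "(real^'d) list \<Rightarrow> nat \<Rightarrow> real" where
  "minor cs i = (let ds = take i cs @ drop (Suc i) cs in
      det (\<chi> r c. (ds ! enum_idx c) $ r :: real^'d^'d))"

definition positively_spanning :: "(real^'d) list \<Rightarrow> bool" where
  "positively_spanning cs \<longleftrightarrow> length cs = CARD('d) + 1 \<and>
     ((\<forall>i\<le>CARD('d). (-1) ^ i * minor cs i > 0) \<or> (\<forall>i\<le>CARD('d). (-1) ^ i * minor cs i < 0))"

text \<open>Simplex S positively decorated by C (C given by its columns C j, j < n).\<close>
definition positively_decorated :: "(nat \<Rightarrow> real^'d) \<Rightarrow> nat set \<Rightarrow> bool" where
  "positively_decorated C S \<longleftrightarrow> positively_spanning (map C (sorted_list_of_set S))"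

definition system :: "nat \<Rightarrow> (nat \<Rightarrow> int^'d) \<Rightarrow> (nat \<Rightarrow> real^'d) \<Rightarrow> (nat \<Rightarrow> real) \<Rightarrow> real^'d \<Rightarrow> real^'d" where
  "system n a C \<gamma> x = (\<chi> i. \<Sum>j<n. (C j $ i) * \<gamma> j * monom x (a j))"

definition nondegenerate_positive_solution ::
  "nat \<Rightarrow> (nat \<Rightarrow> int^'d) \<Rightarrow> (nat \<Rightarrow> real^'d) \<Rightarrow> (nat \<Rightarrow> real) \<Rightarrow> real^'d \<Rightarrow> bool" where
  "nondegenerate_positive_solution n a C \<gamma> x \<longleftrightarrow>
     (\<forall>k. x $ k > 0) \<and> system n a C \<gamma> x = 0 \<and>
     (\<exists>f'. (system n a C \<gamma> has_derivative f') (at x) \<and> det (matrix f') \<noteq> 0)"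

end

theory Submission
  imports Defs
begin


lemma enum_idx_bij: "bij_betw (enum_idx :: 'd::finite \<Rightarrow> nat) UNIV {..<CARD('d)}"
proof -
  obtain f :: "'d \<Rightarrow> nat" where "bij_betw f UNIV {0..<card (UNIV::'d set)}"
    using ex_bij_betw_finite_nat[of "UNIV::'d set"] by auto
  then have "\<exists>f :: 'd \<Rightarrow> nat. bij_betw f UNIV {..<CARD('d)}" by (auto simp: atLeast0LessThan)
  then show ?thesis unfolding enum_idx_def by (rule someI_ex)
qed

lemma enum_idx_inj: "enum_idx (x::'d::finite) = enum_idx y \<longleftrightarrow> x = y"
  using enum_idx_bij[where 'd='d] unfolding bij_betw_def inj_on_def by auto

lemma enum_idx_less: "enum_idx (x::'d::finite) < CARD('d)"
  using enum_idx_bij[where 'd='d] unfolding bij_betw_def by auto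

lemma enum_idx_surj: "k < CARD('d) \<Longrightarrow> \<exists>x::'d::finite. enum_idx x = k"
  using enum_idx_bij[where 'd='d] unfolding bij_betw_def by (metis imageE lessThan_iff)

lemma monom_exp: "monom (\<chi> k. exp (z$k)) a = exp (inner (real_pt a) z)"
proof -
  have "monom (\<chi> k. exp (z$k)) a = (\<Prod>k\<in>UNIV. exp (of_int (a$k) * z$k))"
    unfolding monom_def by (simp add: exp_power_int)
  also have "\<dots> = exp (\<Sum>k\<in>UNIV. of_int (a$k) * z$k)"
    by (simp add: exp_sum)
  also have "\<dots> = exp (inner (real_pt a) z)"
    unfolding inner_vec_def real_pt_def by simp
  finally show ?thesis .
qed

definition Mat :: "(real^'d) list \<Rightarrow> real^'d^'d" where
  "Mat ds = (\<chi> r c. (ds ! enum_idx c) $ r)"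

lemma minor_Mat: "minor cs i = det (Mat (take i cs @ drop (Suc i) cs))"
  unfolding minor_def Mat_def Let_def by simp

lemma det_Mat_swap:
  assumes "p < CARD('d)" "q < CARD('d)" "p \<noteq> q" "length ds = CARD('d)"
  shows "det (Mat (ds[p := ds!q, q := ds!p]) :: real^'d::finite^'d) = - det (Mat ds :: real^'d^'d)"
proof -
  obtain x :: 'd where x: "enum_idx x = p" using enum_idx_surj assms by blast
  obtain y :: 'd where y: "enum_idx y = q" using enum_idx_surj assms by blast
  have xy: "x \<noteq> y" using x y assms by auto
  let ?t = "Transposition.transpose x y"
  have perm: "?t permutes (UNIV::'d set)" by (rule permutes_swap_id) auto
  have "Mat (ds[p := ds!q, q := ds!p]) = (\<chi> i j. (Mat ds :: real^'d^'d) $ i $ ?t j)"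
  proof -
    have "(ds[p := ds!q, q := ds!p]) ! enum_idx j = ds ! enum_idx (?t j)" for j
      using x y xy enum_idx_inj[of j x] enum_idx_inj[of j y] assms(1,2,4)
        by (auto simp: nth_list_update transpose_def)
    then show ?thesis unfolding Mat_def by simp
  qed
  then show ?thesis using det_permute_columns[OF perm, of "Mat ds"] xy by (simp add: sign_swap_id)
qed

lemma det_Mat_rot:
  assumes "k \<le> length ys" "Suc (length ys) = CARD('d)"
  shows "det (Mat (take k ys @ y # drop k ys) :: real^'d::finite^'d) = (-1)^k * det (Mat (y # ys) :: real^'d^'d)"
  using assms(1)
proof (induction k)
  case 0
  then show ?case by simp
next
  case (Suc k)
  define A where "A = take k ys"
  define z where "z = ys ! k"
  define R where "R = drop (Suc k) ys"
  have k: "k < length ys" using Suc by auto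
  have ys: "ys = A @ z # R" unfolding A_def z_def R_def using id_take_nth_drop[OF k] .
  have lenA: "length A = k" unfolding A_def using k by simp
  have e1: "take k ys @ y # drop k ys = A @ y # z # R"
    using ys lenA by (metis append_eq_conv_conj drop_Suc_Cons take_Suc_Cons)
  have e2: "take (Suc k) ys @ y # drop (Suc k) ys = A @ z # y # R"
    using ys lenA by simp
  have sw: "(A @ y # z # R)[k := (A @ y # z # R) ! Suc k, Suc k := (A @ y # z # R) ! k] = A @ z # y # R"
    using lenA by (simp add: list_update_append nth_append)
  have "det (Mat (A @ z # y # R) :: real^'d^'d) = - det (Mat (A @ y # z # R) :: real^'d^'d)"
    using det_Mat_swap[of k "Suc k" "A @ y # z # R"] k assms(2) lenA ys sw by auto
  then show ?case using Suc e1 e2 by simp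
qed

lemma cell_data:
  assumes "in_regular_subdivision n a h S"
  shows "\<exists>w \<mu>. (\<forall>j<n. j\<in>S \<longrightarrow> h j + inner w (real_pt (a j)) = \<mu>) \<and>
                (\<forall>j<n. j\<notin>S \<longrightarrow> h j + inner w (real_pt (a j)) > \<mu>)"
proof -
  obtain F where F: "lower_face (lifted_hull n a h) F" and S: "S = {j. j < n \<and> (real_pt (a j), h j) \<in> F}"
    using assms unfolding in_regular_subdivision_def by blast
  let ?P = "lifted_hull n a h"
  obtain u u0 where u0: "u0 > 0" and Feq: "F = {z \<in> ?P. \<forall>y\<in>?P. inner (u, u0) z \<le> inner (u, u0) y}"
    and Fne: "F \<noteq> {}"
    using F unfolding lower_face_def by blast
  obtain z where z: "z \<in> F" using Fne by blast
  have gen: "(real_pt (a j), h j) \<in> ?P" if "j < n" for j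
    unfolding lifted_hull_def using that by (intro hull_inc) auto
  define \<phi> where "\<phi> j = inner u (real_pt (a j)) + u0 * h j" for j
  have zle: "inner (u,u0) z \<le> \<phi> j" if "j < n" for j
    using z gen[OF that] unfolding Feq \<phi>_def by auto
  have memS: "j \<in> S \<longleftrightarrow> \<phi> j = inner (u,u0) z" if "j < n" for j
  proof
    assume "j \<in> S"
    then have "(real_pt (a j), h j) \<in> F" using S by auto
    then have "\<phi> j \<le> inner (u,u0) z" using z unfolding Feq \<phi>_def by auto
    then show "\<phi> j = inner (u,u0) z" using zle[OF that] by auto
  next
    assume "\<phi> j = inner (u,u0) z"
    then have "(real_pt (a j), h j) \<in> F" using z gen[OF that] unfolding Feq \<phi>_def by auto
    then show "j \<in> S" using S that by auto
  qed
  define w where "w = (1/u0) *\<^sub>R u"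
  define \<mu> where "\<mu> = inner (u,u0) z / u0"
  have eq: "h j + inner w (real_pt (a j)) = \<phi> j / u0" for j
    using u0 unfolding w_def \<phi>_def by (simp add: field_simps)
  show ?thesis
  proof (intro exI conjI allI impI)
    fix j assume "j < n" "j \<in> S"
    then show "h j + inner w (real_pt (a j)) = \<mu>" using memS eq unfolding \<mu>_def by auto
  next
    fix j assume j: "j < n" "j \<notin> S"
    then have "\<phi> j > inner (u,u0) z" using memS zle by force
    then show "h j + inner w (real_pt (a j)) > \<mu>" using eq u0 unfolding \<mu>_def
      by (simp add: divide_strict_right_mono)
  qed
qed





locale sctx =
  fixes n :: nat and a :: "nat \<Rightarrow> int^'d::finite" and C :: "nat \<Rightarrow> real^'d" and D :: "nat set"
  assumes inj_a: "inj_on a {..<n}" and simpD: "is_simplex n a D" and pdec: "positively_decorated C D"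
begin

definition "js = sorted_list_of_set D"
definition "j0 = js ! 0"
definition "jc c = js ! (enum_idx (c::'d) + 1)"
definition "ab j = real_pt (a j)"
definition "Cp = (\<chi> r c. C (jc c) $ r :: real^'d^'d)"
definition "Bm = (\<chi> c. ab (jc c) - ab j0 :: real^'d^'d)"

lemma D_sub: "D \<subseteq> {..<n}" and cardD: "card D = CARD('d) + 1"
  and Dind: "\<not> affine_dependent (real_pt ` a ` D)"
  using simpD unfolding is_simplex_def by auto

lemma finD: "finite D" using D_sub finite_subset by blast

lemma js: "length js = CARD('d) + 1" "distinct js" "set js = D"
  using finD cardD unfolding js_def by auto

lemma jc_in: "jc c \<in> D" and j0_in: "j0 \<in> D"
  using js enum_idx_less[of c] unfolding jc_def j0_def by (auto intro!: nth_mem)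

lemma jc_inj: "jc x = jc y \<longleftrightarrow> x = y"
  using js enum_idx_less[of x] enum_idx_less[of y] enum_idx_inj[of x y]
  unfolding jc_def by (simp add: nth_eq_iff_index_eq)

lemma j0_not_jc: "jc c \<noteq> j0"
  using js enum_idx_less[of c] unfolding jc_def j0_def by (simp add: nth_eq_iff_index_eq)

lemma D_eq: "D = insert j0 (range jc)"
proof
  show "insert j0 (range jc) \<subseteq> D" using jc_in j0_in by auto
  show "D \<subseteq> insert j0 (range jc)"
  proof
    fix x assume "x \<in> D"
    then obtain i where i: "i < CARD('d) + 1" "x = js ! i" using js by (metis in_set_conv_nth)
    show "x \<in> insert j0 (range jc)"
    proof (cases i)
      case 0 then show ?thesis using i unfolding j0_def by simp
    next
      case (Suc k)
      then obtain c :: 'd where "enum_idx c = k" using enum_idx_surj i by auto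
      then show ?thesis using i Suc unfolding jc_def by auto
    qed
  qed
qed

lemma sum_D: "sum f D = f j0 + (\<Sum>c\<in>UNIV. f (jc c))"
proof -
  have "inj jc" using jc_inj by (auto intro: injI)
  moreover have "j0 \<notin> range jc" using j0_not_jc by (metis imageE)
  ultimately show ?thesis
    by (subst D_eq) (simp add: sum.reindex)
qed

lemma map_C_js_nth: "i \<le> CARD('d) \<Longrightarrow> map C js ! i = C (js ! i)"
  using js by simp

lemma Cp_Mat: "Cp = Mat (tl (map C js))"
proof -
  have "C (js ! Suc (enum_idx c)) = tl (map C js) ! enum_idx c" for c :: 'd
    using js enum_idx_less[of c] by (simp add: nth_tl)
  then show ?thesis unfolding Cp_def Mat_def jc_def by (simp add: vec_eq_iff)
qed

lemma minor0: "minor (map C js) 0 = det Cp"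
  unfolding minor_Mat Cp_Mat by (simp add: drop_Suc)

lemma pspan: "(\<forall>i\<le>CARD('d). (-1) ^ i * minor (map C js) i > 0) \<or>
              (\<forall>i\<le>CARD('d). (-1) ^ i * minor (map C js) i < 0)"
  using pdec unfolding positively_decorated_def positively_spanning_def js_def by auto

lemma detCp: "det Cp \<noteq> 0"
  using pspan minor0 by force

lemma Cp_inv: obtains Ci :: "real^'d^'d" where "Cp ** Ci = mat 1" "Ci ** Cp = mat 1"
  using detCp invertible_det_nz unfolding invertible_def by blast

lemma cramer_entry:
  fixes x :: "real^'d"
  assumes "Cp *v x = C j0"
  shows "x $ k * det Cp = (-1) ^ enum_idx k * minor (map C js) (Suc (enum_idx k))"
proof -
  define cs where "cs = map C js"
  define e where "e = enum_idx k"
  have e: "e < CARD('d)" unfolding e_def by (rule enum_idx_less)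
  have lcs: "length (tl cs) = CARD('d)" unfolding cs_def using js by simp
  have m1: "(\<chi> i j. if j = k then (Cp *v x)$i else Cp$i$j) = Mat ((tl cs)[e := C j0])"
  proof -
    have "(tl cs)[e := C j0] ! enum_idx j = (if j = k then C j0 else tl cs ! enum_idx j)" for j
      using lcs enum_idx_less[of j] enum_idx_inj[of j k] unfolding e_def by (auto simp: nth_list_update)
    then show ?thesis using assms unfolding Cp_Mat Mat_def cs_def by (simp add: vec_eq_iff)
  qed
  define ys where "ys = take e (tl cs) @ drop (Suc e) (tl cs)"
  have lys: "Suc (length ys) = CARD('d)" unfolding ys_def using lcs e by simp
  have upd: "(tl cs)[e := C j0] = take e ys @ C j0 # drop e ys"
    unfolding ys_def using lcs e by (simp add: upd_conv_take_nth_drop min_def)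
  have cs0: "cs = C j0 # tl cs" unfolding cs_def j0_def using js by (cases js) auto
  have mn: "C j0 # ys = take (Suc e) cs @ drop (Suc (Suc e)) cs"
    unfolding ys_def by (subst (2 3) cs0) simp
  have "x $ k * det Cp = det (Mat ((tl cs)[e := C j0]))"
    using cramer_lemma[where A=Cp and x=x and k=k] m1 by simp
  also have "\<dots> = (-1)^e * det (Mat (C j0 # ys) :: real^'d^'d)"
    unfolding upd by (rule det_Mat_rot) (use lys e in auto)
  also have "\<dots> = (-1)^e * minor cs (Suc e)"
    unfolding minor_Mat mn by simp
  finally show ?thesis unfolding cs_def e_def .
qed

lemma v_exists: obtains v where "\<forall>c. v $ c > 0" "Cp *v v = - C j0"
proof -
  obtain Ci where Ci: "Cp ** Ci = mat 1" "Ci ** Cp = mat 1" by (rule Cp_inv)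
  define x where "x = Ci *v C j0"
  have x: "Cp *v x = C j0" unfolding x_def by (simp add: matrix_vector_mul_assoc Ci)
  have neg: "x $ k < 0" for k
  proof -
    define e where "e = enum_idx k"
    have e: "Suc e \<le> CARD('d)" unfolding e_def using enum_idx_less[of k] by simp
    have eq: "x $ k * det Cp = - ((-1) ^ Suc e * minor (map C js) (Suc e))"
      using cramer_entry[OF x, of k] unfolding e_def by simp
    from pspan show ?thesis
    proof
      assume P: "\<forall>i\<le>CARD('d). (-1) ^ i * minor (map C js) i > 0"
      then have "det Cp > 0" "(-1) ^ Suc e * minor (map C js) (Suc e) > 0"
        using minor0 e by (metis le0 power_0 mult_1) (use P e in auto)
      then have "x $ k * det Cp < 0" using eq by linarith
      then show ?thesis using \<open>det Cp > 0\<close> by (simp add: mult_less_0_iff)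
    next
      assume P: "\<forall>i\<le>CARD('d). (-1) ^ i * minor (map C js) i < 0"
      then have "det Cp < 0" "(-1) ^ Suc e * minor (map C js) (Suc e) < 0"
        using minor0 e by (metis le0 power_0 mult_1) (use P e in auto)
      then have "x $ k * det Cp > 0" using eq by linarith
      then show ?thesis using \<open>det Cp < 0\<close> by (simp add: zero_less_mult_iff)
    qed
  qed
  show ?thesis
  proof
    show "\<forall>c. (- x) $ c > 0" using neg by simp
    show "Cp *v (- x) = - C j0" using x by (metis diff_0 matrix_vector_mult_diff_distrib matrix_vector_mult_0_right)
  qed
qed

lemma real_pt_inj: "real_pt x = real_pt y \<longleftrightarrow> x = y"
  unfolding real_pt_def by (auto simp: vec_eq_iff)

lemma ab_inj: "inj_on ab D"
  using inj_a D_sub unfolding ab_def inj_on_def by (auto simp: real_pt_inj)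

lemma Bm_invertible: "invertible Bm"
  unfolding invertible_right_inverse matrix_right_invertible_independent_rows
proof (intro allI impI)
  fix c :: "'d \<Rightarrow> real" and i :: 'd
  assume c0: "(\<Sum>i\<in>UNIV. c i *s row i Bm) = 0"
  let ?f = "ab \<circ> jc"
  have injf: "inj ?f"
  proof (rule injI)
    fix x y assume "?f x = ?f y"
    then have "jc x = jc y" using ab_inj jc_in[of x] jc_in[of y] by (simp add: inj_on_eq_iff)
    then show "x = y" using jc_inj by simp
  qed
  have nf: "ab j0 \<notin> range ?f"
  proof
    assume "ab j0 \<in> range ?f"
    then obtain i where "ab j0 = ab (jc i)" by auto
    then have "j0 = jc i" using ab_inj jc_in[of i] j0_in by (simp add: inj_on_eq_iff)
    then show False using j0_not_jc[of i] by argo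
  qed
  define S where "S = real_pt ` a ` D"
  have S: "S = insert (ab j0) (range ?f)"
    unfolding S_def by (subst D_eq) (auto simp: ab_def image_image)
  define g where "g = inv_into UNIV ?f"
  define U where "U p = (if p = ab j0 then - sum c UNIV else c (g p))" for p
  have Uf: "U (?f i) = c i" for i
  proof -
    have "?f i \<noteq> ab j0" using nf by (metis rangeI)
    then show ?thesis unfolding U_def g_def using injf by (simp del: o_apply)
  qed
  have Ufc: "U \<circ> ?f = c" by (rule ext) (simp only: comp_apply[of U] Uf)
  have finS: "finite S" unfolding S by simp
  have s1: "sum U S = 0"
    unfolding S using nf injf
    by (simp add: sum.reindex U_def[of "ab j0"] Ufc del: o_apply) 
  have "sum (\<lambda>p. U p *\<^sub>R p) S = (- sum c UNIV) *\<^sub>R ab j0 + (\<Sum>i\<in>UNIV. c i *\<^sub>R ab (jc i))"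
    unfolding S using nf injf
    by (simp add: sum.reindex U_def[of "ab j0"] comp_def Uf[simplified comp_def])
  also have "\<dots> = (\<Sum>i\<in>UNIV. c i *\<^sub>R (ab (jc i) - ab j0))"
    by (simp add: scaleR_diff_right sum_subtractf scaleR_sum_left)
  also have "\<dots> = (\<Sum>i\<in>UNIV. c i *s row i Bm)"
    unfolding Bm_def row_def by (simp add: scalar_mult_eq_scaleR vec_lambda_eta)
  finally have s2: "sum (\<lambda>p. U p *\<^sub>R p) S = 0" using c0 by simp
  have "\<not> (\<exists>v\<in>S. U v \<noteq> 0)"
    using Dind affine_dependent_explicit_finite[OF finS] s1 s2 unfolding S_def by blast
  then have "U (?f i) = 0" unfolding S by blast
  then show "c i = 0" using Uf by simp
qed

lemma Bm_inv: obtains Bi :: "real^'d^'d" where "Bm ** Bi = mat 1" "Bi ** Bm = mat 1"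
  using Bm_invertible unfolding invertible_def by blast

end




lemma system_sum: "system n a C \<gamma> y = (\<Sum>j<n. (\<gamma> j * monom y (a j)) *\<^sub>R C j)"
  unfolding system_def by (simp add: vec_eq_iff sum_component mult_ac)

lemma monom_pos_exp:
  assumes "\<forall>k. y$k > 0"
  shows "monom y a = exp (\<Sum>k\<in>UNIV. real_of_int (a$k) * ln (y$k))"
proof -
  have "y = (\<chi> k. exp ((\<chi> k. ln (y$k)) $ k))" using assms by (simp add: vec_eq_iff)
  then have "monom y a = exp (inner (real_pt a) (\<chi> k. ln (y$k)))"
    using monom_exp[of "\<chi> k. ln (y$k)" a] by simp
  then show ?thesis unfolding inner_vec_def real_pt_def by simp
qed

lemma open_pos: "open {y::real^'d::finite. \<forall>k. y$k > 0}"
proof -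
  have "{y::real^'d. \<forall>k. y$k > 0} = (\<Inter>k. {y. y$k > 0})" by auto
  then show ?thesis by (simp add: open_INT open_halfspace_component_gt_cart)
qed

lemma monom_deriv:
  assumes x: "\<forall>k. x$k > 0"
  shows "((\<lambda>y. monom y a) has_derivative (\<lambda>dx. monom x a * (\<Sum>k\<in>UNIV. real_of_int (a$k) * (dx$k * (1 / x$k))))) (at x)"
proof -
  have d: "((\<lambda>y. exp (\<Sum>k\<in>UNIV. real_of_int (a$k) * ln (y$k))) has_derivative
      (\<lambda>dx. (\<Sum>k\<in>UNIV. real_of_int (a$k) * (dx$k * (1 / x$k))) * exp (\<Sum>k\<in>UNIV. real_of_int (a$k) * ln (x$k)))) (at x)"
  proof (rule has_derivative_exp, rule has_derivative_sum, rule has_derivative_mult_right)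
    fix k
    have h1: "((\<lambda>y. y $ k) has_derivative (\<lambda>y. y $ k)) (at x)"
      by (rule bounded_linear_imp_has_derivative) (rule bounded_linear_vec_nth)
    have h2: "(ln has_real_derivative 1 / x$k) (at (x$k))"
      by (rule DERIV_ln_divide) (use x in auto)
    show "((\<lambda>y. ln (y $ k)) has_derivative (\<lambda>dx. dx $ k * (1 / x $ k))) (at x)"
      using DERIV_compose_FDERIV[where f=ln and g="\<lambda>y. y$k", OF h2 h1] by simp
  qed
  show ?thesis
    apply (rule has_derivative_transform_within_open[OF _ open_pos, of _ _ x])
    using d monom_pos_exp[OF x] apply (simp add: mult.commute)
    using x apply simp
    by (simp add: monom_pos_exp)
qed

lemma system_deriv:
  assumes x: "\<forall>k. x$k > 0"
  shows "(system n a C \<gamma> has_derivative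
     (\<lambda>dx. \<Sum>j<n. (\<gamma> j * (monom x (a j) * (\<Sum>k\<in>UNIV. real_of_int (a j $k) * (dx$k * (1 / x$k))))) *\<^sub>R C j)) (at x)"
  unfolding system_sum[abs_def]
  by (intro has_derivative_sum has_derivative_scaleR_left has_derivative_mult_right monom_deriv x)




lemma mv_neg: "(A::real^'n^'m) *v (- y) = - (A *v y)"
  by (metis diff_0 matrix_vector_mult_diff_distrib matrix_vector_mult_0_right)

lemma ln_bd:
  fixes v e :: real
  assumes v: "v > 0" and e: "\<bar>e\<bar> \<le> v / 2"
  shows "\<bar>ln (v + e) - ln v\<bar> \<le> 2 * \<bar>e\<bar> / v"
proof -
  define s where "s = e / v"
  have s: "\<bar>s\<bar> \<le> 1/2" unfolding s_def using v e by (simp add: abs_div divide_le_eq)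
  have "v + e = v * (1 + s)" unfolding s_def using v by (simp add: field_simps)
  moreover have "1 + s > 0" using s by linarith
  ultimately have eq: "ln (v + e) - ln v = ln (1 + s)" using v by (simp add: ln_mult)
  have b: "\<bar>ln (1 + s) - s\<bar> \<le> 2 * s\<^sup>2" by (rule abs_ln_one_plus_x_minus_x_bound[OF s])
  have "2 * s\<^sup>2 \<le> \<bar>s\<bar>"
  proof -
    have "2 * s\<^sup>2 = (2 * \<bar>s\<bar>) * \<bar>s\<bar>" by (simp add: power2_eq_square abs_mult_self_eq)
    also have "\<dots> \<le> 1 * \<bar>s\<bar>" using s by (intro mult_right_mono) auto
    finally show ?thesis by simp
  qed
  then have "\<bar>ln (1 + s)\<bar> \<le> 2 * \<bar>s\<bar>" using b by linarith
  then show ?thesis unfolding eq s_def using v by (simp add: abs_div)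
qed

context sctx begin

definition "vv = (SOME v. (\<forall>c. v$c > 0) \<and> Cp *v v = - C j0)"
definition "Ci = (SOME M. Cp ** M = mat 1 \<and> M ** Cp = mat 1)"
definition "Bi = (SOME M. Bm ** M = mat 1 \<and> M ** Bm = mat 1)"

lemma vv: "vv$c > 0" "Cp *v vv = - C j0"
proof -
  have "\<exists>v. (\<forall>c. v$c > 0) \<and> Cp *v v = - C j0" using v_exists by metis
  from someI_ex[OF this] show "vv$c > 0" "Cp *v vv = - C j0" unfolding vv_def by auto
qed

lemma Ci: "Cp ** Ci = mat 1" "Ci ** Cp = mat 1"
proof -
  have "\<exists>M. Cp ** M = mat 1 \<and> M ** Cp = mat 1" using Cp_inv by metis
  from someI_ex[OF this] show "Cp ** Ci = mat 1" "Ci ** Cp = mat 1" unfolding Ci_def by auto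
qed

lemma Bi: "Bm ** Bi = mat 1" "Bi ** Bm = mat 1"
proof -
  have "\<exists>M. Bm ** M = mat 1 \<and> M ** Bm = mat 1" using Bm_inv by metis
  from someI_ex[OF this] show "Bm ** Bi = mat 1" "Bi ** Bm = mat 1" unfolding Bi_def by auto
qed

definition "KC = (SOME K. K > 0 \<and> (\<forall>y. norm (Ci *v y) \<le> norm y * K))"
definition "KB = (SOME K. K > 0 \<and> (\<forall>y. norm (Bi *v y) \<le> norm y * K))"

lemma KC: "KC > 0" "norm (Ci *v y) \<le> norm y * KC"
proof -
  have "\<exists>K. K > 0 \<and> (\<forall>y. norm (Ci *v y) \<le> norm y * K)"
    using bounded_linear.pos_bounded[OF matrix_vector_mul_bounded_linear[of Ci]] by blast
  from someI_ex[OF this] show "KC > 0" "norm (Ci *v y) \<le> norm y * KC" unfolding KC_def by auto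
qed

lemma KB: "KB > 0" "norm (Bi *v y) \<le> norm y * KB"
proof -
  have "\<exists>K. K > 0 \<and> (\<forall>y. norm (Bi *v y) \<le> norm y * K)"
    using bounded_linear.pos_bounded[OF matrix_vector_mul_bounded_linear[of Bi]] by blast
  from someI_ex[OF this] show "KB > 0" "norm (Bi *v y) \<le> norm y * KB" unfolding KB_def by auto
qed

definition "z0 = Bi *v (\<chi> c. ln (vv$c))"
definition "R0 = norm z0 + 1"
definition "AA = 1 + (\<Sum>j<n. norm (ab j))"
definition "NC = 1 + (\<Sum>j<n. norm (C j))"
definition "vmin = Min (range (\<lambda>c. vv$c))"
definition "dd = real CARD('d)"
definition "elow = exp (- (AA * R0))"
definition "ebig = exp (AA * R0)"
definition "K1 = ebig * KC * NC"
definition "th0 = min (min (vmin / (2 * K1)) (vmin / (2 * KB * dd * K1)))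
                      (min (elow / (4 * KB * dd * KC * AA * NC)) (elow / 2))"
definition "LD = AA * R0 - ln th0"

lemma R0_pos: "R0 > 0" unfolding R0_def by (simp add: add_nonneg_pos)
lemma AA_pos: "AA \<ge> 1" unfolding AA_def by (simp add: sum_nonneg)
lemma NC_pos: "NC \<ge> 1" unfolding NC_def by (simp add: sum_nonneg)
lemma dd_pos: "dd \<ge> 1" unfolding dd_def by simp
lemma vmin_pos: "vmin > 0" and vmin_le: "vmin \<le> vv$c"
proof -
  have "finite (range (\<lambda>c. vv$c))" by simp
  then show "vmin > 0" unfolding vmin_def using vv(1) by (subst Min_gr_iff) auto
  show "vmin \<le> vv$c" unfolding vmin_def by (rule Min_le) auto
qed
lemma elow_pos: "elow > 0" unfolding elow_def by simp
lemma ebig_pos: "ebig > 0" unfolding ebig_def by simp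
lemma K1_pos: "K1 > 0" unfolding K1_def using ebig_pos KC NC_pos by simp
lemma th0_pos: "th0 > 0"
  unfolding th0_def using vmin_pos K1_pos KB dd_pos elow_pos KC AA_pos NC_pos by simp

lemma norm_ab: "j < n \<Longrightarrow> norm (ab j) \<le> AA"
proof -
  assume "j < n"
  then have "norm (ab j) \<le> (\<Sum>j<n. norm (ab j))"
    by (intro member_le_sum) auto
  then show ?thesis unfolding AA_def by simp
qed

lemma norm_C: "j < n \<Longrightarrow> norm (C j) \<le> NC"
proof -
  assume "j < n"
  then have "norm (C j) \<le> (\<Sum>j<n. norm (C j))"
    by (intro member_le_sum) auto
  then show ?thesis unfolding NC_def by simp
qed

lemma j0_lt: "j0 < n" using j0_in D_sub by auto

lemma Bm_apply: "(Bm *v z) $ c = inner (ab (jc c)) z - inner (ab j0) z"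
  unfolding Bm_def matrix_vector_mult_def inner_vec_def
  by (simp add: sum_subtractf algebra_simps)

lemma Cp_apply: "Cp *v y = (\<Sum>c\<in>UNIV. y$c *\<^sub>R C (jc c))"
  unfolding matrix_mult_sum Cp_def column_def by (simp add: scalar_mult_eq_scaleR vec_lambda_eta)


lemma core:
  assumes cell: "\<forall>j\<in>D. h j + inner w (ab j) = \<mu>"
    and far: "\<forall>j<n. j \<notin> D \<longrightarrow> h j + inner w (ab j) \<ge> \<mu> + Lc"
    and Lc: "Lc \<ge> LD"
    and gam: "\<forall>j<n. \<gamma> j = exp (- h j)"
  shows "\<exists>x. nondegenerate_positive_solution n a C \<gamma> x \<and>
           (\<forall>i\<in>D. \<forall>j<n. j \<notin> D \<longrightarrow> \<gamma> j * monom x (a j) < \<gamma> i * monom x (a i))"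
proof -
  define \<eta> where "\<eta> j = h j + inner w (ab j) - \<mu>" for j
  define E where "E j z = exp (- \<eta> j + inner (ab j) z)" for j z
  define J where "J = {j. j < n \<and> j \<notin> D}"
  define \<theta> where "\<theta> = exp (- Lc + AA * R0)"
  have finJ: "finite J" unfolding J_def by simp
  have \<eta>D: "\<eta> j = 0" if "j \<in> D" for j using cell that unfolding \<eta>_def by auto
  have \<eta>J: "\<eta> j \<ge> Lc" if "j \<in> J" for j using far that unfolding \<eta>_def J_def by auto
  have ED: "E j z = exp (inner (ab j) z)" if "j \<in> D" for j z using \<eta>D[OF that] unfolding E_def by simp
  have \<theta>le: "\<theta> \<le> th0"
  proof -
    have "\<theta> \<le> exp (- LD + AA * R0)" unfolding \<theta>_def using Lc by simp
    also have "\<dots> = th0" unfolding LD_def using th0_pos by simp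
    finally show ?thesis .
  qed
  have \<theta>pos: "\<theta> > 0" unfolding \<theta>_def by simp
  have inner_bd: "\<bar>inner (ab j) z\<bar> \<le> AA * R0" if "j < n" "norm z \<le> R0" for j z
  proof -
    have "\<bar>inner (ab j) z\<bar> \<le> norm (ab j) * norm z" by (rule Cauchy_Schwarz_ineq2)
    also have "\<dots> \<le> AA * R0" using norm_ab[OF that(1)] that(2) AA_pos
      by (intro mult_mono) auto
    finally show ?thesis .
  qed
  have EJ: "E j z \<le> \<theta>" if "j \<in> J" "norm z \<le> R0" for j z
  proof -
    have "j < n" using that J_def by auto
    then have "- \<eta> j + inner (ab j) z \<le> - Lc + AA * R0" using \<eta>J[OF that(1)] inner_bd[OF _ that(2)] by force
    then show ?thesis unfolding E_def \<theta>_def by simp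
  qed
  have ElowD: "E j z \<ge> elow" if "j \<in> D" "norm z \<le> R0" for j z
  proof -
    have "j < n" using that D_sub by auto
    then have "- (AA * R0) \<le> inner (ab j) z" using inner_bd[OF _ that(2)] by force
    then show ?thesis unfolding ED[OF that(1)] elow_def by simp
  qed
  define Rf where "Rf z = (\<Sum>j\<in>J. E j z *\<^sub>R C j)" for z
  define e where "e z = - (exp (- inner (ab j0) z)) *\<^sub>R (Ci *v Rf z)" for z
  define \<Phi> where "\<Phi> z = Bi *v (\<chi> c. ln (vv$c + e z $ c))" for z
  have Rf_bd: "norm (Rf z) \<le> \<theta> * NC" if "norm z \<le> R0" for z
  proof -
    have "norm (Rf z) \<le> (\<Sum>j\<in>J. norm (E j z *\<^sub>R C j))" unfolding Rf_def by (rule norm_sum)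
    also have "\<dots> \<le> (\<Sum>j\<in>J. \<theta> * norm (C j))"
    proof (rule sum_mono)
      fix j assume "j \<in> J"
      then have "E j z \<le> \<theta>" using EJ that by auto
      moreover have "E j z > 0" unfolding E_def by simp
      ultimately show "norm (E j z *\<^sub>R C j) \<le> \<theta> * norm (C j)"
        by (simp add: mult_right_mono)
    qed
    also have "\<dots> = \<theta> * (\<Sum>j\<in>J. norm (C j))" by (simp add: sum_distrib_left)
    also have "\<dots> \<le> \<theta> * NC"
    proof -
      have "(\<Sum>j\<in>J. norm (C j)) \<le> (\<Sum>j<n. norm (C j))"
        by (rule sum_mono2) (auto simp: J_def)
      then show ?thesis unfolding NC_def using \<theta>pos by (intro mult_left_mono) auto
    qed
    finally show ?thesis .
  qed
  have e_bd: "norm (e z) \<le> \<theta> * K1" if "norm z \<le> R0" for z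
  proof -
    have ex: "exp (- inner (ab j0) z) \<le> ebig"
      using inner_bd[OF j0_lt that] unfolding ebig_def by simp
    have "norm (e z) = exp (- inner (ab j0) z) * norm (Ci *v Rf z)" unfolding e_def by simp
    also have "\<dots> \<le> ebig * (norm (Rf z) * KC)"
      using ex KC(2)[of "Rf z"] ebig_pos by (intro mult_mono) auto
    also have "\<dots> \<le> ebig * (\<theta> * NC * KC)"
      using Rf_bd[OF that] KC(1) ebig_pos by (intro mult_left_mono mult_right_mono) auto
    also have "\<dots> = \<theta> * K1" unfolding K1_def by simp
    finally show ?thesis .
  qed
  have ec_bd: "\<bar>e z $ c\<bar> \<le> \<theta> * K1" if "norm z \<le> R0" for z c
    using e_bd[OF that] component_le_norm_cart[of "e z" c] by linarith
  have ec_half: "\<bar>e z $ c\<bar> \<le> vv$c / 2" if "norm z \<le> R0" for z c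
  proof -
    have "\<theta> * K1 \<le> th0 * K1" using \<theta>le K1_pos by simp
    also have "\<dots> \<le> (vmin / (2 * K1)) * K1" unfolding th0_def using K1_pos by (intro mult_right_mono) auto
    also have "\<dots> = vmin / 2" using K1_pos by simp
    finally show ?thesis using ec_bd[OF that, of c] vmin_le[of c] by linarith
  qed
  have normS: "norm z \<le> R0" if "z \<in> cball z0 1" for z
    using that norm_triangle_ineq2[of z z0] unfolding R0_def by (simp add: dist_norm norm_minus_commute)
  have maps: "\<Phi> z \<in> cball z0 1" if "z \<in> cball z0 1" for z
  proof -
    have nz: "norm z \<le> R0" using normS[OF that] .
    have each: "\<bar>ln (vv$c + e z $ c) - ln (vv$c)\<bar> \<le> 2 * (\<theta> * K1) / vmin" for c
    proof -
      have "\<bar>ln (vv$c + e z $ c) - ln (vv$c)\<bar> \<le> 2 * \<bar>e z $ c\<bar> / vv$c"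
        by (rule ln_bd[OF vv(1) ec_half[OF nz]])
      also have "\<dots> \<le> 2 * (\<theta> * K1) / vv$c"
        using ec_bd[OF nz, of c] vv(1)[of c] by (simp add: divide_right_mono)
      also have "\<dots> \<le> 2 * (\<theta> * K1) / vmin"
        using vmin_pos vmin_le[of c] \<theta>pos K1_pos by (intro divide_left_mono) auto
      finally show ?thesis .
    qed
    have "\<Phi> z - z0 = Bi *v (\<chi> c. ln (vv$c + e z $ c) - ln (vv$c))"
    proof -
      have dv: "(\<chi> c. ln (vv$c + e z $ c) - ln (vv$c)) = (\<chi> c. ln (vv$c + e z $ c)) - (\<chi> c. ln (vv$c))"
        by (simp add: vec_eq_iff)
      show ?thesis unfolding \<Phi>_def z0_def dv by (simp add: matrix_vector_mult_diff_distrib)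
    qed
    then have "norm (\<Phi> z - z0) \<le> norm (\<chi> c. ln (vv$c + e z $ c) - ln (vv$c)) * KB"
      using KB(2) by simp
    also have "\<dots> \<le> (\<Sum>c\<in>UNIV. \<bar>ln (vv$c + e z $ c) - ln (vv$c)\<bar>) * KB"
      using KB(1) norm_le_l1_cart[of "\<chi> c. ln (vv$c + e z $ c) - ln (vv$c)"]
      by (intro mult_right_mono) auto
    also have "\<dots> \<le> (\<Sum>c\<in>(UNIV::'d set). 2 * (\<theta> * K1) / vmin) * KB"
      using KB(1) by (intro mult_right_mono sum_mono each) auto
    also have "\<dots> = dd * 2 * \<theta> * K1 * KB / vmin" unfolding dd_def by simp
    also have "\<dots> \<le> dd * 2 * (vmin / (2 * KB * dd * K1)) * K1 * KB / vmin"
    proof -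
      have "\<theta> \<le> vmin / (2 * KB * dd * K1)" using \<theta>le unfolding th0_def by linarith
      then show ?thesis using dd_pos K1_pos KB(1) vmin_pos
        by (intro divide_right_mono mult_right_mono mult_left_mono) auto
    qed
    also have "\<dots> = 1" using dd_pos K1_pos KB(1) vmin_pos by (simp add: field_simps)
    finally show ?thesis by (simp add: dist_norm norm_minus_commute)
  qed
  have cont: "continuous_on (cball z0 1) \<Phi>"
  proof -
    have cRf: "continuous_on UNIV Rf" unfolding Rf_def E_def by (intro continuous_intros)
    have ce: "continuous_on UNIV e" unfolding e_def
      by (intro continuous_intros bounded_linear.continuous_on[OF matrix_vector_mul_bounded_linear] cRf)
    have cec: "continuous_on (cball z0 1) (\<lambda>z. e z $ c)" for c
      by (rule bounded_linear.continuous_on[OF bounded_linear_vec_nth])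
         (rule continuous_on_subset[OF ce], simp)
    have nz0: "vv$c + e z $ c \<noteq> 0" if "z \<in> cball z0 1" for z c
      using ec_half[OF normS[OF that], of c] vv(1)[of c] by linarith
    show ?thesis unfolding \<Phi>_def
      by (intro bounded_linear.continuous_on[OF matrix_vector_mul_bounded_linear]
           continuous_on_vec_lambda continuous_on_ln continuous_intros cec ballI nz0)
  qed
  obtain z where zS: "z \<in> cball z0 1" and zfix: "\<Phi> z = z"
    using brouwer[of "cball z0 1" \<Phi>] maps cont by auto
  have nz: "norm z \<le> R0" using normS[OF zS] .
  have Bz: "Bm *v z = (\<chi> c. ln (vv$c + e z $ c))"
  proof -
    have "Bm *v z = Bm *v \<Phi> z" using zfix by simp
    also have "\<dots> = (\<chi> c. ln (vv$c + e z $ c))" unfolding \<Phi>_def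
      by (simp add: matrix_vector_mul_assoc Bi)
    finally show ?thesis .
  qed
  have Ejc: "E (jc c) z = exp (inner (ab j0) z) * (vv$c + e z $ c)" for c
  proof -
    have pos: "vv$c + e z $ c > 0" using ec_half[OF nz, of c] vv(1)[of c] by linarith
    have "inner (ab (jc c)) z - inner (ab j0) z = ln (vv$c + e z $ c)"
      using Bz Bm_apply[of z c] by (simp add: vec_eq_iff)
    then have "inner (ab (jc c)) z = inner (ab j0) z + ln (vv$c + e z $ c)" by simp
    then show ?thesis unfolding ED[OF jc_in] using pos by (simp add: exp_add)
  qed
  have F0: "(\<Sum>j<n. E j z *\<^sub>R C j) = 0"
  proof -
    define \<iota> where "\<iota> = inner (ab j0) z"
    have un: "{..<n} = D \<union> J" unfolding J_def using D_sub by auto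
    have dis: "D \<inter> J = {}" unfolding J_def by auto
    have "(\<Sum>j<n. E j z *\<^sub>R C j) = (\<Sum>j\<in>D. E j z *\<^sub>R C j) + Rf z"
      unfolding un Rf_def by (rule sum.union_disjoint[OF finD finJ dis])
    also have "(\<Sum>j\<in>D. E j z *\<^sub>R C j) = E j0 z *\<^sub>R C j0 + Cp *v (\<chi> c. E (jc c) z)"
      unfolding sum_D Cp_apply by simp
    also have "(\<chi> c. E (jc c) z) = exp \<iota> *\<^sub>R (vv + e z)"
      unfolding \<iota>_def by (simp add: vec_eq_iff Ejc)
    also have "Cp *v (exp \<iota> *\<^sub>R (vv + e z)) = exp \<iota> *\<^sub>R (- C j0 + Cp *v e z)"
      by (simp add: matrix_vector_mult_scaleR matrix_vector_right_distrib vv(2))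
    also have "Cp *v e z = - exp (- \<iota>) *\<^sub>R Rf z"
      unfolding e_def \<iota>_def
      by (simp add: mv_neg matrix_vector_mult_scaleR matrix_vector_mul_assoc Ci)
    also have "E j0 z = exp \<iota>" unfolding \<iota>_def using ED[OF j0_in] .
    also have "exp \<iota> *\<^sub>R C j0 + exp \<iota> *\<^sub>R (- C j0 + - exp (- \<iota>) *\<^sub>R Rf z) + Rf z = 0"
    proof -
      have "exp \<iota> *\<^sub>R (exp (- \<iota>) *\<^sub>R Rf z) = Rf z" by (simp add: mult_exp_exp)
      then show ?thesis by (simp add: scaleR_add_right scaleR_diff_right)
    qed
    finally show ?thesis .
  qed
  define x where "x = (\<chi> k. exp ((z - w) $ k))"
  have xpos: "\<forall>k. x$k > 0" unfolding x_def by simp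
  have termj: "\<gamma> j * monom x (a j) = exp (- \<mu>) * E j z" if "j < n" for j
  proof -
    have "monom x (a j) = exp (inner (ab j) (z - w))"
      unfolding x_def ab_def by (rule monom_exp)
    then have "\<gamma> j * monom x (a j) = exp (- h j + inner (ab j) (z - w))"
      using gam that by (simp add: mult_exp_exp)
    also have "\<dots> = exp (- \<mu> + (- \<eta> j + inner (ab j) z))"
      unfolding \<eta>_def by (simp add: inner_diff_right inner_diff_left inner_commute)
    finally show ?thesis unfolding E_def by (simp add: mult_exp_exp)
  qed
  have sys0: "system n a C \<gamma> x = 0"
  proof -
    have "system n a C \<gamma> x = (\<Sum>j<n. (exp (- \<mu>) * E j z) *\<^sub>R C j)"
      unfolding system_sum by (rule sum.cong) (auto simp: termj)
    also have "\<dots> = exp (- \<mu>) *\<^sub>R (\<Sum>j<n. E j z *\<^sub>R C j)"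
      by (simp add: scaleR_sum_right)
    finally show ?thesis using F0 by simp
  qed
  have nondeg: "\<exists>f'. (system n a C \<gamma> has_derivative f') (at x) \<and> det (matrix f') \<noteq> 0"
  proof -
    define f' where "f' dx = (\<Sum>j<n. (\<gamma> j * (monom x (a j) * (\<Sum>k\<in>UNIV. real_of_int (a j $k) * (dx$k * (1 / x$k))))) *\<^sub>R C j)" for dx
    have der: "(system n a C \<gamma> has_derivative f') (at x)"
      unfolding f'_def[abs_def] by (rule system_deriv[OF xpos])
    have lin: "linear f'" using has_derivative_linear[OF der] .
    have ker: "dx = 0" if f0: "f' dx = 0" for dx
    proof -
      define W where "W = (\<chi> k. dx$k * (1 / x$k))"
      have innW: "(\<Sum>k\<in>UNIV. real_of_int (a j $k) * (dx$k * (1 / x$k))) = inner (ab j) W" for j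
        unfolding W_def ab_def real_pt_def inner_vec_def by simp
      define G where "G = (\<Sum>j<n. (E j z * inner (ab j) W) *\<^sub>R C j)"
      have "f' dx = exp (- \<mu>) *\<^sub>R G"
        unfolding f'_def G_def innW scaleR_sum_right
        by (rule sum.cong) (auto simp: termj mult.assoc[symmetric])
      then have G0: "G = 0" using f0 by simp
      define P where "P = (\<Sum>j\<in>J. (E j z * inner (ab j - ab j0) W) *\<^sub>R C j)"
      define Y where "Y = (\<chi> c. E (jc c) z * (Bm *v W) $ c)"
      have "(\<Sum>j<n. (E j z * inner (ab j - ab j0) W) *\<^sub>R C j) = G - inner (ab j0) W *\<^sub>R (\<Sum>j<n. E j z *\<^sub>R C j)"
        unfolding G_def scaleR_sum_right sum_subtractf[symmetric]
        by (rule sum.cong) (auto simp: inner_diff_left algebra_simps)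
      then have G'0: "(\<Sum>j<n. (E j z * inner (ab j - ab j0) W) *\<^sub>R C j) = 0" using G0 F0 by simp
      have un: "{..<n} = D \<union> J" unfolding J_def using D_sub by auto
      have dis: "D \<inter> J = {}" unfolding J_def by auto
      have "(\<Sum>j<n. (E j z * inner (ab j - ab j0) W) *\<^sub>R C j) = Cp *v Y + P"
        unfolding un P_def sum.union_disjoint[OF finD finJ dis] sum_D Cp_apply Y_def
        by (simp add: Bm_apply inner_diff_left)
      then have CY: "Cp *v Y = - P" using G'0 by (simp add: eq_neg_iff_add_eq_0)
      have Y: "Y = - (Ci *v P)"
      proof -
        have "Y = Ci *v (Cp *v Y)" by (simp add: matrix_vector_mul_assoc Ci)
        then show ?thesis using CY by (simp add: mv_neg)
      qed
      have P_bd: "norm P \<le> \<theta> * (2 * AA * norm W) * NC"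
      proof -
        have "norm P \<le> (\<Sum>j\<in>J. norm ((E j z * inner (ab j - ab j0) W) *\<^sub>R C j))"
          unfolding P_def by (rule norm_sum)
        also have "\<dots> \<le> (\<Sum>j\<in>J. (\<theta> * (2 * AA * norm W)) * norm (C j))"
        proof (rule sum_mono)
          fix j assume j: "j \<in> J"
          then have jn: "j < n" unfolding J_def by auto
          have "\<bar>inner (ab j - ab j0) W\<bar> \<le> norm (ab j - ab j0) * norm W" by (rule Cauchy_Schwarz_ineq2)
          also have "\<dots> \<le> (2 * AA) * norm W"
          proof -
            have "norm (ab j - ab j0) \<le> norm (ab j) + norm (ab j0)" by (rule norm_triangle_ineq4)
            also have "\<dots> \<le> 2 * AA" using norm_ab[OF jn] norm_ab[OF j0_lt] by simp
            finally show ?thesis by (intro mult_right_mono) auto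
          qed
          finally have i1: "\<bar>inner (ab j - ab j0) W\<bar> \<le> 2 * AA * norm W" .
          have e1: "E j z \<le> \<theta>" "E j z > 0" using EJ[OF j nz] unfolding E_def by auto
          have "\<bar>E j z * inner (ab j - ab j0) W\<bar> \<le> \<theta> * (2 * AA * norm W)"
            unfolding abs_mult using e1 i1 by (intro mult_mono) auto
          then show "norm ((E j z * inner (ab j - ab j0) W) *\<^sub>R C j) \<le> (\<theta> * (2 * AA * norm W)) * norm (C j)"
            by (simp add: mult_right_mono)
        qed
        also have "\<dots> = (\<theta> * (2 * AA * norm W)) * (\<Sum>j\<in>J. norm (C j))" by (simp add: sum_distrib_left)
        also have "\<dots> \<le> (\<theta> * (2 * AA * norm W)) * NC"
        proof -
          have "(\<Sum>j\<in>J. norm (C j)) \<le> (\<Sum>j<n. norm (C j))"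
            by (rule sum_mono2) (auto simp: J_def)
          then show ?thesis unfolding NC_def using \<theta>pos AA_pos by (intro mult_left_mono) auto
        qed
        finally show ?thesis .
      qed
      define q where "q = \<theta> * (2 * AA * norm W) * NC * KC / elow"
      have BW: "\<bar>(Bm *v W) $ c\<bar> \<le> q" for c
      proof -
        have "elow * \<bar>(Bm *v W) $ c\<bar> \<le> E (jc c) z * \<bar>(Bm *v W) $ c\<bar>"
          using ElowD[OF jc_in nz] by (intro mult_right_mono) auto
        also have "\<dots> = \<bar>Y $ c\<bar>" unfolding Y_def using ElowD[OF jc_in nz, of c] elow_pos
          by (simp add: abs_mult)
        also have "\<dots> \<le> norm (Ci *v P)" unfolding Y by (metis component_le_norm_cart abs_minus_cancel norm_minus_cancel vector_uminus_component)
        also have "\<dots> \<le> norm P * KC" by (rule KC(2))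
        also have "\<dots> \<le> \<theta> * (2 * AA * norm W) * NC * KC" using P_bd KC(1) by (intro mult_right_mono) auto
        finally show ?thesis unfolding q_def using elow_pos by (simp add: field_simps)
      qed
      have "norm W = norm (Bi *v (Bm *v W))" by (simp add: matrix_vector_mul_assoc Bi)
      also have "\<dots> \<le> norm (Bm *v W) * KB" by (rule KB(2))
      also have "\<dots> \<le> (\<Sum>c\<in>UNIV. \<bar>(Bm *v W) $ c\<bar>) * KB"
        using KB(1) norm_le_l1_cart by (intro mult_right_mono) auto
      also have "\<dots> \<le> (\<Sum>c\<in>(UNIV::'d set). q) * KB"
        using KB(1) BW by (intro mult_right_mono sum_mono) auto
      also have "\<dots> = (dd * \<theta> * 2 * AA * NC * KC * KB / elow) * norm W"
        unfolding q_def dd_def by simp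
      also have "\<dots> \<le> (1/2) * norm W"
      proof (rule mult_right_mono)
        have "\<theta> \<le> elow / (4 * KB * dd * KC * AA * NC)" using \<theta>le unfolding th0_def by linarith
        then have "dd * \<theta> * 2 * AA * NC * KC * KB \<le> dd * (elow / (4 * KB * dd * KC * AA * NC)) * 2 * AA * NC * KC * KB"
          using dd_pos AA_pos NC_pos KC(1) KB(1) by (intro mult_right_mono mult_left_mono) auto
        also have "\<dots> = elow / 2" using dd_pos AA_pos NC_pos KC(1) KB(1) by (simp add: field_simps)
        finally show "dd * \<theta> * 2 * AA * NC * KC * KB / elow \<le> 1/2" using elow_pos by (simp add: divide_le_eq)
      qed simp
      finally have "norm W = 0" by simp
      then have "W = 0" by simp
      then have "\<forall>k. dx $ k = 0 \<or> x $ k = 0" unfolding W_def by (simp add: vec_eq_iff)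
      then show "dx = 0" using xpos by (metis less_irrefl vec_eq_iff zero_index)
    qed
    have "inj f'" using ker linear_inj_iff_eq_0[OF lin] by blast
    then have "det (matrix f') \<noteq> 0" using det_nz_iff_inj[OF lin] by simp
    then show ?thesis using der by blast
  qed
  have ratio: "\<forall>i\<in>D. \<forall>j<n. j \<notin> D \<longrightarrow> \<gamma> j * monom x (a j) < \<gamma> i * monom x (a i)"
  proof (intro ballI allI impI)
    fix i j assume i: "i \<in> D" and j: "j < n" "j \<notin> D"
    have "\<theta> < elow" using \<theta>le elow_pos unfolding th0_def by linarith
    then have "E j z < E i z" using EJ[of j z] ElowD[OF i nz] j nz unfolding J_def by fastforce
    then show "\<gamma> j * monom x (a j) < \<gamma> i * monom x (a i)"
      using termj[OF j(1)] termj[of i] i D_sub by auto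
  qed
  show ?thesis
    using xpos sys0 nondeg ratio unfolding nondegenerate_positive_solution_def by blast
qed

end




context sctx begin

lemma w_unique:
  assumes "\<forall>i\<in>D. h i + inner w (ab i) = \<mu>" "\<forall>i\<in>D. h i + inner w' (ab i) = \<mu>'"
  shows "w = w' \<and> \<mu> = \<mu>'"
proof -
  have "Bm *v (w - w') = 0"
  proof -
    have "(Bm *v (w - w')) $ c = 0" for c
    proof -
      have "h (jc c) + inner (ab (jc c)) w = \<mu>" "h j0 + inner (ab j0) w = \<mu>"
           "h (jc c) + inner (ab (jc c)) w' = \<mu>'" "h j0 + inner (ab j0) w' = \<mu>'"
        using assms jc_in[of c] j0_in by (auto simp: inner_commute)
      then show ?thesis unfolding Bm_apply inner_diff_right by linarith
    qed
    then show ?thesis by (simp add: vec_eq_iff)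
  qed
  then have "Bi *v (Bm *v (w - w')) = 0" by simp
  then have "w - w' = 0" by (simp add: matrix_vector_mul_assoc Bi)
  then have "w = w'" by simp
  then show ?thesis using assms j0_in by auto
qed

lemma per_simplex:
  fixes m :: "nat \<Rightarrow> nat \<Rightarrow> real" and l :: nat
  assumes cone: "\<And>h'. (\<forall>r<l. (\<Sum>j<n. m r j * h' j) > 0) \<Longrightarrow> in_regular_subdivision n a h' D"
    and hL: "\<forall>r<l. (\<Sum>j<n. m r j * h j) > Lq * (1 + (\<Sum>r<l. \<Sum>j<n. \<bar>m r j\<bar>))"
    and Lq: "Lq \<ge> LD" "Lq > 0"
    and gam: "\<forall>j<n. \<gamma> j = exp (- h j)"
  shows "\<exists>x. nondegenerate_positive_solution n a C \<gamma> x \<and>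
           (\<forall>i\<in>D. \<forall>j<n. j \<notin> D \<longrightarrow> \<gamma> j * monom x (a j) < \<gamma> i * monom x (a i))"
proof -
  define M where "M = 1 + (\<Sum>r<l. \<Sum>j<n. \<bar>m r j\<bar>)"
  have mle: "\<bar>m r j\<bar> \<le> M" if "r < l" "j < n" for r j
  proof -
    have "\<bar>m r j\<bar> \<le> (\<Sum>j<n. \<bar>m r j\<bar>)" using that by (intro member_le_sum) auto
    also have "\<dots> \<le> (\<Sum>r<l. \<Sum>j<n. \<bar>m r j\<bar>)" using that by (intro member_le_sum) (auto intro: sum_nonneg)
    finally show ?thesis unfolding M_def by simp
  qed
  have reg: "in_regular_subdivision n a h D"
  proof (rule cone, intro allI impI)
    fix r assume "r < l"
    then have "(\<Sum>j<n. m r j * h j) > Lq * M" using hL unfolding M_def by auto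
    moreover have "Lq * M > 0" using Lq unfolding M_def by (simp add: add_pos_nonneg sum_nonneg)
    ultimately show "(\<Sum>j<n. m r j * h j) > 0" by linarith
  qed
  obtain w \<mu> where c1: "\<forall>j<n. j \<in> D \<longrightarrow> h j + inner w (real_pt (a j)) = \<mu>"
    and c2: "\<forall>j<n. j \<notin> D \<longrightarrow> h j + inner w (real_pt (a j)) > \<mu>"
    using cell_data[OF reg] by blast
  have cell: "\<forall>j\<in>D. h j + inner w (ab j) = \<mu>" using c1 D_sub unfolding ab_def by auto
  have far: "\<forall>j<n. j \<notin> D \<longrightarrow> h j + inner w (ab j) \<ge> \<mu> + Lq"
  proof (intro allI impI)
    fix j assume j: "j < n" "j \<notin> D"
    define h' where "h' = h(j := h j - Lq)"
    have reg': "in_regular_subdivision n a h' D"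
    proof (rule cone, intro allI impI)
      fix r assume r: "r < l"
      have "(\<Sum>i<n. m r i * h' i) = (\<Sum>i<n. m r i * h i) - m r j * Lq"
      proof -
        have "(\<Sum>i<n. m r i * h' i) = (\<Sum>i<n. m r i * h i - (if i = j then m r j * Lq else 0))"
          unfolding h'_def by (rule sum.cong) (auto simp: algebra_simps)
        also have "\<dots> = (\<Sum>i<n. m r i * h i) - m r j * Lq"
          using j by (simp add: sum_subtractf)
        finally show ?thesis .
      qed
      moreover have "m r j * Lq \<le> M * Lq" using mle[OF r j(1)] Lq by (intro mult_right_mono) auto
      moreover have "(\<Sum>j<n. m r j * h j) > Lq * M" using hL r unfolding M_def by auto
      ultimately show "(\<Sum>i<n. m r i * h' i) > 0" by (simp add: mult.commute)
    qed
    obtain w' \<mu>' where d1: "\<forall>i<n. i \<in> D \<longrightarrow> h' i + inner w' (real_pt (a i)) = \<mu>'"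
      and d2: "\<forall>i<n. i \<notin> D \<longrightarrow> h' i + inner w' (real_pt (a i)) > \<mu>'"
      using cell_data[OF reg'] by blast
    have "\<forall>i\<in>D. h i + inner w' (ab i) = \<mu>'"
      using d1 D_sub j unfolding ab_def h'_def by auto
    then have "w = w' \<and> \<mu> = \<mu>'" using w_unique[OF cell] by blast
    then show "h j + inner w (ab j) \<ge> \<mu> + Lq" using d2 j unfolding ab_def h'_def by auto
  qed
  show ?thesis by (rule core[OF cell far Lq(1) gam])
qed

end


theorem theorem2p11:
  fixes n p l :: nat
    and a :: "nat \<Rightarrow> int^'d"
    and C :: "nat \<Rightarrow> real^'d"
    and \<Delta> :: "nat \<Rightarrow> nat set"
    and m :: "nat \<Rightarrow> nat \<Rightarrow> real"
  assumes distinct_pts: "inj_on a {..<n}"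
    and n_ge: "n \<ge> CARD('d) + 2"
    and full_dim: "aff_dim (convex hull (real_pt ` a ` {..<n})) = int CARD('d)"
    and simplices: "\<And>k. k < p \<Longrightarrow> is_simplex n a (\<Delta> k)"
    and distinct_simplices: "inj_on \<Delta> {..<p}"
    and common_subdiv: "\<exists>h. \<forall>k<p. in_regular_subdivision n a h (\<Delta> k)"
    and pos_dec: "\<And>k. k < p \<Longrightarrow> positively_decorated C (\<Delta> k)"
    and cone: "\<And>h. (\<forall>k<p. in_regular_subdivision n a h (\<Delta> k)) \<longleftrightarrow>
                     (\<forall>r<l. (\<Sum>j<n. m r j * h j) > 0)"
  shows "\<exists>t0 :: (nat \<Rightarrow> real) \<Rightarrow> real.
           (\<forall>\<epsilon>. (\<forall>r<l. 0 < \<epsilon> r \<and> \<epsilon> r < 1) \<longrightarrow> t0 \<epsilon> > 0) \<and>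
           (\<forall>\<gamma>. (\<forall>j<n. \<gamma> j > 0) \<and>
                 (\<exists>\<epsilon>. (\<forall>r<l. 0 < \<epsilon> r \<and> \<epsilon> r < 1) \<and>
                      (\<forall>r<l. (\<Prod>j<n. \<gamma> j powr m r j) < t0 \<epsilon> powr \<epsilon> r))
             \<longrightarrow> (\<exists>X. finite X \<and> card X = p \<and>
                     (\<forall>x\<in>X. nondegenerate_positive_solution n a C \<gamma> x)))"
proof -
  define Lq where "Lq = 1 + (\<Sum>k<p. \<bar>sctx.LD n a C (\<Delta> k)\<bar>)"
  define M where "M = 1 + (\<Sum>r<l. \<Sum>j<n. \<bar>m r j\<bar>)"
  define \<delta> where "\<delta> = exp (- (Lq * M))"
  define t0 where "t0 \<epsilon> = \<delta> powr (\<Sum>r<l. 1 / \<epsilon> r)" for \<epsilon> :: "nat \<Rightarrow> real"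
  have sc: "sctx n a C (\<Delta> k)" if "k < p" for k
    unfolding sctx_def using distinct_pts simplices[OF that] pos_dec[OF that] by simp
  have Lq_ge: "Lq \<ge> sctx.LD n a C (\<Delta> k)" if "k < p" for k
  proof -
    have "\<bar>sctx.LD n a C (\<Delta> k)\<bar> \<le> (\<Sum>k<p. \<bar>sctx.LD n a C (\<Delta> k)\<bar>)"
      using that by (intro member_le_sum) auto
    then show ?thesis unfolding Lq_def by linarith
  qed
  have Lq_pos: "Lq > 0" unfolding Lq_def by (simp add: add_pos_nonneg sum_nonneg)
  have M_pos: "M > 0" unfolding M_def by (simp add: add_pos_nonneg sum_nonneg)
  have \<delta>_pos: "\<delta> > 0" and \<delta>_le: "\<delta> \<le> 1" unfolding \<delta>_def using Lq_pos M_pos by auto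
  show ?thesis
  proof (intro exI[of _ t0] conjI allI impI)
    fix \<epsilon> :: "nat \<Rightarrow> real"
    show "t0 \<epsilon> > 0" unfolding t0_def using \<delta>_pos by simp
  next
    fix \<gamma> :: "nat \<Rightarrow> real"
    assume asm: "(\<forall>j<n. 0 < \<gamma> j) \<and> (\<exists>\<epsilon>. (\<forall>r<l. 0 < \<epsilon> r \<and> \<epsilon> r < 1) \<and>
                      (\<forall>r<l. (\<Prod>j<n. \<gamma> j powr m r j) < t0 \<epsilon> powr \<epsilon> r))"
    then have gpos: "\<forall>j<n. 0 < \<gamma> j" by blast
    from asm obtain \<epsilon> where \<epsilon>: "\<forall>r<l. 0 < \<epsilon> r \<and> \<epsilon> r < 1"
      and Q: "\<forall>r<l. (\<Prod>j<n. \<gamma> j powr m r j) < t0 \<epsilon> powr \<epsilon> r" by blast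
    define h where "h j = - ln (\<gamma> j)" for j
    have gam: "\<forall>j<n. \<gamma> j = exp (- h j)" using gpos unfolding h_def by simp
    have hL: "\<forall>r<l. (\<Sum>j<n. m r j * h j) > Lq * M"
    proof (intro allI impI)
      fix r assume r: "r < l"
      define S where "S = (\<Sum>r<l. 1 / \<epsilon> r)"
      have "1 / \<epsilon> r \<le> S" unfolding S_def using r \<epsilon>
        by (intro member_le_sum) (auto intro: less_imp_le)
      then have "1 \<le> S * \<epsilon> r" using \<epsilon> r by (simp add: divide_le_eq)
      then have "t0 \<epsilon> powr \<epsilon> r \<le> \<delta>"
        unfolding t0_def S_def[symmetric] powr_powr using powr_mono'[of 1 "S * \<epsilon> r" \<delta>] \<delta>_pos \<delta>_le by simp
      then have lt: "(\<Prod>j<n. \<gamma> j powr m r j) < \<delta>" using Q r by force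
      have ppos: "(\<Prod>j<n. \<gamma> j powr m r j) > 0" using gpos by (intro prod_pos) auto
      have "ln (\<Prod>j<n. \<gamma> j powr m r j) = (\<Sum>j<n. m r j * ln (\<gamma> j))"
        using gpos by (subst ln_prod) auto
      moreover have "ln (\<Prod>j<n. \<gamma> j powr m r j) < ln \<delta>" using lt ppos \<delta>_pos by simp
      ultimately have "(\<Sum>j<n. m r j * ln (\<gamma> j)) < - (Lq * M)" unfolding \<delta>_def by simp
      moreover have "(\<Sum>j<n. m r j * h j) = - (\<Sum>j<n. m r j * ln (\<gamma> j))"
        unfolding h_def by (simp add: sum_negf)
      ultimately show "(\<Sum>j<n. m r j * h j) > Lq * M" by linarith
    qed
    have ex: "\<forall>k\<in>{..<p}. \<exists>x. nondegenerate_positive_solution n a C \<gamma> x \<and>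
           (\<forall>i\<in>\<Delta> k. \<forall>j<n. j \<notin> \<Delta> k \<longrightarrow> \<gamma> j * monom x (a j) < \<gamma> i * monom x (a i))"
    proof
      fix k assume "k \<in> {..<p}"
      then have k: "k < p" by simp
      show "\<exists>x. nondegenerate_positive_solution n a C \<gamma> x \<and>
           (\<forall>i\<in>\<Delta> k. \<forall>j<n. j \<notin> \<Delta> k \<longrightarrow> \<gamma> j * monom x (a j) < \<gamma> i * monom x (a i))"
      proof (rule sctx.per_simplex[OF sc[OF k]])
        fix h' :: "nat \<Rightarrow> real"
        assume "\<forall>r<l. 0 < (\<Sum>j<n. m r j * h' j)"
        then show "in_regular_subdivision n a h' (\<Delta> k)" using cone[of h'] k by blast
      next
        show "\<forall>r<l. Lq * (1 + (\<Sum>r<l. \<Sum>j<n. \<bar>m r j\<bar>)) < (\<Sum>j<n. m r j * h j)"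
          using hL unfolding M_def by blast
      qed (use Lq_ge[OF k] Lq_pos gam in auto)
    qed
    then obtain xs where xs: "\<forall>k\<in>{..<p}. nondegenerate_positive_solution n a C \<gamma> (xs k) \<and>
           (\<forall>i\<in>\<Delta> k. \<forall>j<n. j \<notin> \<Delta> k \<longrightarrow> \<gamma> j * monom (xs k) (a j) < \<gamma> i * monom (xs k) (a i))"
      by (metis bchoice)
    have inj: "inj_on xs {..<p}"
    proof (rule inj_onI, rule ccontr)
      fix k k' assume k: "k \<in> {..<p}" and k': "k' \<in> {..<p}" and eq: "xs k = xs k'" and ne: "k \<noteq> k'"
      have dne: "\<Delta> k \<noteq> \<Delta> k'" using distinct_simplices k k' ne unfolding inj_on_def by blast
      have fin: "finite (\<Delta> k)" "finite (\<Delta> k')"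
        using simplices k k' unfolding is_simplex_def by (auto intro: finite_subset)
      have cd: "card (\<Delta> k) = card (\<Delta> k')" using simplices k k' unfolding is_simplex_def by auto
      have sub: "\<Delta> k \<subseteq> {..<n}" "\<Delta> k' \<subseteq> {..<n}" using simplices k k' unfolding is_simplex_def by auto
      obtain j where j: "j \<in> \<Delta> k'" "j \<notin> \<Delta> k"
      proof -
        have "\<not> \<Delta> k' \<subseteq> \<Delta> k" using card_subset_eq[OF fin(1)] cd dne by metis
        then show ?thesis using that by blast
      qed
      obtain i where i: "i \<in> \<Delta> k" "i \<notin> \<Delta> k'"
      proof -
        have "\<not> \<Delta> k \<subseteq> \<Delta> k'" using card_subset_eq[OF fin(2)] cd dne by metis
        then show ?thesis using that by blast
      qed
      have "\<gamma> j * monom (xs k) (a j) < \<gamma> i * monom (xs k) (a i)"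
        using xs k i(1) j sub by blast
      moreover have "\<gamma> i * monom (xs k') (a i) < \<gamma> j * monom (xs k') (a j)"
        using xs k' j(1) i sub by blast
      ultimately show False using eq by simp
    qed
    show "\<exists>X. finite X \<and> card X = p \<and> (\<forall>x\<in>X. nondegenerate_positive_solution n a C \<gamma> x)"
    proof (intro exI conjI)
      show "finite (xs ` {..<p})" by simp
      show "card (xs ` {..<p}) = p" using card_image[OF inj] by simp
      show "\<forall>x\<in>xs ` {..<p}. nondegenerate_positive_solution n a C \<gamma> x" using xs by blast
    qed
  qed
qed


end
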